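(* Let $X$ be a simplicial set and $S\subseteq X^\sharp$ a set of non-degenerate simplices. Let $Y$ be the pushout in simplicial sets of $\bigsqcup_{s\in S}\Delta[m_s]\xleftarrow{\sqcup_s\rho_s}\bigsqcup_{s\in S}\Delta[n_s]\xrightarrow{(\bar s)_s}X$, with canonical map $q:X\to Y$. Then $q$ is degreewise surjective and there is a (unique) map $p:Y\to DX$ with $p\circ q=\eta_X$; $p$ is degreewise surjective. If $Y$ is non-singular, then $p$ is an isomorphism.
   Context: $X^\sharp$ is the set of non-degenerate simplices, $n_x$ the degree of $x$, $\bar x:\Delta[n_x]\to X$ its representing map, $\varepsilon_i:[0]\to[n]$ the operator $0\mapsto i$. A simplicial set is non-singular if every non-degenerate simplex has degreewise injective representing map. The desingularization $DX$ is the image of $X\to\prod_f Y$, $x\mapsto(f(x))_f$, over all quotient maps $f:X\to Y$ (maps $X\to X/R$ for operator-compatible families of equivalence relations) with $Y$ non-singular; $\eta_X:X\to DX$ is the corestriction. Enforcer: for $x\in X^\sharp$ of degree $n$, let $i\sim j$ iff $x\varepsilon_i=x\varepsilon_j$, $i\approx k$ iff some $j$ has $i\le k\le j$ and $i\sim j$, and $\simeq$ the equivalence relation generated by $\approx$; its classes are intervals, and $\rho_x:[n]\to[m_x]$ is the order-preserving surjection onto the ordered quotient $\{0,\dots,n\}/\simeq\cong[m_x]$. *)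

theory Defs
  imports Main
begin

text \<open>A simplicial set: for each degree n a set of n-simplices, and for each operator
  alpha : [m] -> [n] (an order-preserving map, represented by a function nat => nat whose
  values outside {0..m} are irrelevant) an action  sop X n m alpha : X_n -> X_m,  x |-> x alpha.\<close>

record 'a sset =
  sx :: "nat \<Rightarrow> 'a set"
  sop :: "nat \<Rightarrow> nat \<Rightarrow> (nat \<Rightarrow> nat) \<Rightarrow> 'a \<Rightarrow> 'a"

definition opr :: "nat \<Rightarrow> nat \<Rightarrow> (nat \<Rightarrow> nat) \<Rightarrow> bool" where
  "opr m n \<alpha> \<longleftrightarrow> (\<forall>i\<le>m. \<alpha> i \<le> n) \<and> (\<forall>i j. i \<le> j \<longrightarrow> j \<le> m \<longrightarrow> \<alpha> i \<le> \<alpha> j)"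

definition sset :: "'a sset \<Rightarrow> bool" where
  "sset X \<longleftrightarrow>
     (\<forall>n m \<alpha> x. opr m n \<alpha> \<longrightarrow> x \<in> sx X n \<longrightarrow> sop X n m \<alpha> x \<in> sx X m)
   \<and> (\<forall>n x. x \<in> sx X n \<longrightarrow> sop X n n id x = x)
   \<and> (\<forall>n m k \<alpha> \<beta> x. opr m n \<alpha> \<longrightarrow> opr k m \<beta> \<longrightarrow> x \<in> sx X n \<longrightarrow>
        sop X m k \<beta> (sop X n m \<alpha> x) = sop X n k (\<alpha> \<circ> \<beta>) x)
   \<and> (\<forall>n m \<alpha> \<alpha>' x. (\<forall>i\<le>m. \<alpha> i = \<alpha>' i) \<longrightarrow> x \<in> sx X n \<longrightarrow> sop X n m \<alpha> x = sop X n m \<alpha>' x)"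

definition smap :: "'a sset \<Rightarrow> 'b sset \<Rightarrow> (nat \<Rightarrow> 'a \<Rightarrow> 'b) \<Rightarrow> bool" where
  "smap X Y f \<longleftrightarrow> (\<forall>n x. x \<in> sx X n \<longrightarrow> f n x \<in> sx Y n)
     \<and> (\<forall>n m \<alpha> x. opr m n \<alpha> \<longrightarrow> x \<in> sx X n \<longrightarrow> f m (sop X n m \<alpha> x) = sop Y n m \<alpha> (f n x))"

definition siso :: "'a sset \<Rightarrow> 'b sset \<Rightarrow> (nat \<Rightarrow> 'a \<Rightarrow> 'b) \<Rightarrow> bool" where
  "siso X Y f \<longleftrightarrow> smap X Y f \<and> (\<exists>g. smap Y X g
      \<and> (\<forall>n x. x \<in> sx X n \<longrightarrow> g n (f n x) = x)
      \<and> (\<forall>n y. y \<in> sx Y n \<longrightarrow> f n (g n y) = y))"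

text \<open>Degenerate and non-degenerate simplices; X^sharp is a set of pairs (degree, simplex).\<close>
definition degenerate :: "'a sset \<Rightarrow> nat \<Rightarrow> 'a \<Rightarrow> bool" where
  "degenerate X n x \<longleftrightarrow> (\<exists>m \<sigma> y. m < n \<and> opr n m \<sigma> \<and> \<sigma> ` {0..n} = {0..m}
      \<and> y \<in> sx X m \<and> x = sop X m n \<sigma> y)"

definition nondeg :: "'a sset \<Rightarrow> (nat \<times> 'a) set" where
  "nondeg X = {(n, x). x \<in> sx X n \<and> \<not> degenerate X n x}"

text \<open>Standard simplex Delta[n]: k-simplices are operators [k] -> [n], normalised to 0 outside {0..k}.\<close>
definition cut :: "nat \<Rightarrow> (nat \<Rightarrow> nat) \<Rightarrow> nat \<Rightarrow> nat" where
  "cut k f = (\<lambda>i. if i \<le> k then f i else 0)"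

definition delta :: "nat \<Rightarrow> (nat \<Rightarrow> nat) sset" where
  "delta n = \<lparr> sx = (\<lambda>k. {\<alpha>. opr k n \<alpha> \<and> (\<forall>i>k. \<alpha> i = 0)}),
              sop = (\<lambda>_ k \<beta> \<alpha>. cut k (\<alpha> \<circ> \<beta>)) \<rparr>"

definition nonsingular :: "'a sset \<Rightarrow> bool" where
  "nonsingular X \<longleftrightarrow> (\<forall>(n, x) \<in> nondeg X. \<forall>k. inj_on (\<lambda>\<alpha>. sop X n k \<alpha> x) (sx (delta n) k))"

definition qrel :: "'a sset \<Rightarrow> (nat \<Rightarrow> ('a \<times> 'a) set) \<Rightarrow> bool" where
  "qrel X R \<longleftrightarrow> (\<forall>n. equiv (sx X n) (R n))
     \<and> (\<forall>n m \<alpha> x y. opr m n \<alpha> \<longrightarrow> (x, y) \<in> R n \<longrightarrow> (sop X n m \<alpha> x, sop X n m \<alpha> y) \<in> R m)"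

definition quot :: "'a sset \<Rightarrow> (nat \<Rightarrow> ('a \<times> 'a) set) \<Rightarrow> 'a set sset" where
  "quot X R = \<lparr> sx = (\<lambda>n. sx X n // R n),
               sop = (\<lambda>n m \<alpha> c. R m `` {sop X n m \<alpha> (SOME x. x \<in> c)}) \<rparr>"

definition goodrel :: "'a sset \<Rightarrow> (nat \<Rightarrow> ('a \<times> 'a) set) \<Rightarrow> bool" where
  "goodrel X R \<longleftrightarrow> qrel X R \<and> nonsingular (quot X R)"

text \<open>eta_X : X -> prod_R X/R (product over all quotient maps to non-singular targets;
  components at indices R that are not such quotients are set to a dummy value).\<close>
definition eta :: "'a sset \<Rightarrow> nat \<Rightarrow> 'a \<Rightarrow> (nat \<Rightarrow> ('a \<times> 'a) set) \<Rightarrow> 'a set" where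
  "eta X n x = (\<lambda>R. if goodrel X R then R n `` {x} else {})"

text \<open>DX: the image of eta_X, with the (componentwise) product structure.\<close>
definition desing :: "'a sset \<Rightarrow> ((nat \<Rightarrow> ('a \<times> 'a) set) \<Rightarrow> 'a set) sset" where
  "desing X = \<lparr> sx = (\<lambda>n. eta X n ` sx X n),
                 sop = (\<lambda>n m \<alpha> F. (\<lambda>R. if goodrel X R then sop (quot X R) n m \<alpha> (F R) else {})) \<rparr>"

definition esim :: "'a sset \<Rightarrow> nat \<Rightarrow> 'a \<Rightarrow> nat \<Rightarrow> nat \<Rightarrow> bool" where
  "esim X n x i j \<longleftrightarrow> sop X n 0 (\<lambda>_. i) x = sop X n 0 (\<lambda>_. j) x"

definition eapprox :: "'a sset \<Rightarrow> nat \<Rightarrow> 'a \<Rightarrow> (nat \<times> nat) set" where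
  "eapprox X n x = {(i, k). \<exists>j. i \<le> k \<and> k \<le> j \<and> j \<le> n \<and> esim X n x i j}"

definition eeq :: "'a sset \<Rightarrow> nat \<Rightarrow> 'a \<Rightarrow> (nat \<times> nat) set" where
  "eeq X n x = (eapprox X n x \<union> (eapprox X n x)\<inverse>)\<^sup>*"

definition eclasses :: "'a sset \<Rightarrow> nat \<Rightarrow> 'a \<Rightarrow> nat set set" where
  "eclasses X n x = {0..n} // eeq X n x"

text \<open>m_x: the ordered quotient {0..n}/~ has m_x + 1 elements.\<close>
definition mdeg :: "'a sset \<Rightarrow> nat \<Rightarrow> 'a \<Rightarrow> nat" where
  "mdeg X n x = card (eclasses X n x) - 1"

text \<open>rho_x(i) = position of the class of i in the ordered quotient (classes being intervals,
  this is the number of classes lying entirely below i).\<close>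
definition rho :: "'a sset \<Rightarrow> nat \<Rightarrow> 'a \<Rightarrow> nat \<Rightarrow> nat" where
  "rho X n x = (\<lambda>i. if i \<le> n then card {c \<in> eclasses X n x. \<forall>j\<in>c. j < i} else 0)"

definition coprod_delta :: "'s set \<Rightarrow> ('s \<Rightarrow> nat) \<Rightarrow> ('s \<times> (nat \<Rightarrow> nat)) sset" where
  "coprod_delta S d = \<lparr> sx = (\<lambda>k. {(s, \<alpha>). s \<in> S \<and> \<alpha> \<in> sx (delta (d s)) k}),
                        sop = (\<lambda>_ k \<beta> (s, \<alpha>). (s, cut k (\<alpha> \<circ> \<beta>))) \<rparr>"

definition po_rel :: "'b sset \<Rightarrow> 'c sset \<Rightarrow> 'a sset \<Rightarrow> (nat \<Rightarrow> 'c \<Rightarrow> 'b) \<Rightarrow> (nat \<Rightarrow> 'c \<Rightarrow> 'a)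
     \<Rightarrow> nat \<Rightarrow> (('b + 'a) \<times> ('b + 'a)) set" where
  "po_rel B C X g f n =
     (let D = sx B n <+> sx X n;
          G = {(Inl (g n c), Inr (f n c)) | c. c \<in> sx C n}
      in (G \<union> G\<inverse>)\<^sup>* \<inter> (D \<times> D))"

definition pushout :: "'b sset \<Rightarrow> 'c sset \<Rightarrow> 'a sset \<Rightarrow> (nat \<Rightarrow> 'c \<Rightarrow> 'b) \<Rightarrow> (nat \<Rightarrow> 'c \<Rightarrow> 'a)
     \<Rightarrow> ('b + 'a) set sset" where
  "pushout B C X g f = \<lparr> sx = (\<lambda>n. (sx B n <+> sx X n) // po_rel B C X g f n),
     sop = (\<lambda>n m \<alpha> c. po_rel B C X g f m ``
              {case (SOME z. z \<in> c) of Inl b \<Rightarrow> Inl (sop B n m \<alpha> b) | Inr x \<Rightarrow> Inr (sop X n m \<alpha> x)}) \<rparr>"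

definition po_inr :: "'b sset \<Rightarrow> 'c sset \<Rightarrow> 'a sset \<Rightarrow> (nat \<Rightarrow> 'c \<Rightarrow> 'b) \<Rightarrow> (nat \<Rightarrow> 'c \<Rightarrow> 'a)
     \<Rightarrow> nat \<Rightarrow> 'a \<Rightarrow> ('b + 'a) set" where
  "po_inr B C X g f n x = po_rel B C X g f n `` {Inr x}"

text \<open>The specific pushout of the theorem:
  coprod_s Delta[m_s] <- coprod_s rho_s - coprod_s Delta[n_s] - (bar s)_s -> X.\<close>
definition enf_B :: "'a sset \<Rightarrow> (nat \<times> 'a) set \<Rightarrow> ((nat \<times> 'a) \<times> (nat \<Rightarrow> nat)) sset" where
  "enf_B X S = coprod_delta S (\<lambda>s. mdeg X (fst s) (snd s))"

definition enf_C :: "(nat \<times> 'a) set \<Rightarrow> ((nat \<times> 'a) \<times> (nat \<Rightarrow> nat)) sset" where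
  "enf_C S = coprod_delta S fst"

definition enf_g :: "'a sset \<Rightarrow> nat \<Rightarrow> (nat \<times> 'a) \<times> (nat \<Rightarrow> nat) \<Rightarrow> (nat \<times> 'a) \<times> (nat \<Rightarrow> nat)" where
  "enf_g X k = (\<lambda>(s, \<alpha>). (s, cut k (rho X (fst s) (snd s) \<circ> \<alpha>)))"

definition enf_f :: "'a sset \<Rightarrow> nat \<Rightarrow> (nat \<times> 'a) \<times> (nat \<Rightarrow> nat) \<Rightarrow> 'a" where
  "enf_f X k = (\<lambda>(s, \<alpha>). sop X (fst s) k \<alpha> (snd s))"

definition enf_Y :: "'a sset \<Rightarrow> (nat \<times> 'a) set \<Rightarrow> (((nat \<times> 'a) \<times> (nat \<Rightarrow> nat)) + 'a) set sset" where
  "enf_Y X S = pushout (enf_B X S) (enf_C S) X (enf_g X) (enf_f X)"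

definition enf_q :: "'a sset \<Rightarrow> (nat \<times> 'a) set \<Rightarrow> nat \<Rightarrow> 'a \<Rightarrow> (((nat \<times> 'a) \<times> (nat \<Rightarrow> nat)) + 'a) set" where
  "enf_q X S = po_inr (enf_B X S) (enf_C S) X (enf_g X) (enf_f X)"

end

theory Submission imports Defs begin

lemma eapprox_le: "(i,k) \<in> eapprox X n x \<Longrightarrow> i \<le> k \<and> k \<le> n"
  by (auto simp: eapprox_def)

lemma eapproxI: "i \<le> k \<Longrightarrow> k \<le> j \<Longrightarrow> j \<le> n \<Longrightarrow> esim X n x i j \<Longrightarrow> (i,k) \<in> eapprox X n x"
  unfolding eapprox_def by blast

lemma eeq_equiv: "equiv UNIV (eeq X n x)"
  unfolding eeq_def
  by (rule equivI) (auto simp: refl_on_def intro: sym_rtrancl trans_rtrancl sym_Un_converse)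

lemma eeq_bound: "(a,b) \<in> eeq X n x \<Longrightarrow> a = b \<or> (a \<le> n \<and> b \<le> n)"
  unfolding eeq_def
proof (induction rule: rtrancl_induct)
  case base then show ?case by simp
next
  case (step y z) then show ?case by (auto dest: eapprox_le)
qed

lemma eeq_cut:
  assumes "(a,b) \<in> eeq X n x"
    and "\<not> (\<exists>i j. i < t \<and> t \<le> j \<and> j \<le> n \<and> esim X n x i j)"
  shows "(a < t) = (b < t)"
  using assms(1) unfolding eeq_def
proof (induction rule: rtrancl_induct)
  case base then show ?case by simp
next
  case (step y z)
  from step.hyps(2) have "(y < t) = (z < t)"
  proof
    assume "(y,z) \<in> eapprox X n x"
    then obtain j where "y \<le> z" "z \<le> j" "j \<le> n" "esim X n x y j" by (auto simp: eapprox_def)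
    then show ?thesis using assms(2) by (metis le_trans not_le)
  next
    assume "(y,z) \<in> (eapprox X n x)\<inverse>"
    then obtain j where "z \<le> y" "y \<le> j" "j \<le> n" "esim X n x z j" by (auto simp: eapprox_def)
    then show ?thesis using assms(2) by (metis le_trans not_le)
  qed
  with step.IH show ?case by simp
qed

lemma eclasses_finite: "finite (eclasses X n x)"
  unfolding eclasses_def quotient_def by simp

lemma eclass_mem: "c \<in> eclasses X n x \<Longrightarrow> \<exists>a\<le>n. c = eeq X n x `` {a}"
  unfolding eclasses_def by (auto elim!: quotientE)

lemma eclass_in: "a \<le> n \<Longrightarrow> eeq X n x `` {a} \<in> eclasses X n x"
  unfolding eclasses_def by (auto intro: quotientI)

lemma eclass_self: "a \<in> eeq X n x `` {a}"
  by (simp add: eeq_def)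

lemma eclass_sub: "a \<le> n \<Longrightarrow> j \<in> eeq X n x `` {a} \<Longrightarrow> j \<le> n"
  using eeq_bound[of a j X n x] by auto

lemma eclass_eqI: "(a,b) \<in> eeq X n x \<Longrightarrow> eeq X n x `` {a} = eeq X n x `` {b}"
  using eeq_equiv by (metis equiv_class_eq)

lemma eclass_eqI2: "j \<in> eeq X n x `` {a} \<Longrightarrow> eeq X n x `` {a} = eeq X n x `` {j}"
  by (simp add: eclass_eqI)

lemma rho_0: "rho X n x 0 = 0"
proof -
  have "{c \<in> eclasses X n x. \<forall>j\<in>c. j < 0} = {}"
    using eclass_mem eclass_self by fastforce
  then show ?thesis by (simp add: rho_def)
qed

lemma rho_mono: assumes "i \<le> j" "j \<le> n" shows "rho X n x i \<le> rho X n x j"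
proof -
  have "{c \<in> eclasses X n x. \<forall>j'\<in>c. j' < i} \<subseteq> {c \<in> eclasses X n x. \<forall>j'\<in>c. j' < j}"
    using assms(1) by auto
  then have "card {c \<in> eclasses X n x. \<forall>j'\<in>c. j' < i} \<le> card {c \<in> eclasses X n x. \<forall>j'\<in>c. j' < j}"
    by (rule card_mono[rotated]) (simp add: eclasses_finite)
  then show ?thesis using assms by (simp add: rho_def)
qed

lemma rho_step: assumes "i < n" shows "rho X n x (Suc i) \<le> Suc (rho X n x i)"
proof -
  let ?E = "eeq X n x"
  have "{c \<in> eclasses X n x. \<forall>j\<in>c. j < Suc i} \<subseteq> insert (?E``{i}) {c \<in> eclasses X n x. \<forall>j\<in>c. j < i}"
  proof
    fix c assume c: "c \<in> {c \<in> eclasses X n x. \<forall>j\<in>c. j < Suc i}"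
    then have c1: "c \<in> eclasses X n x" and c2: "\<forall>j\<in>c. j < Suc i" by simp_all
    show "c \<in> insert (?E``{i}) {c \<in> eclasses X n x. \<forall>j\<in>c. j < i}"
    proof (cases "i \<in> c")
      case True
      obtain a where "c = ?E``{a}" using eclass_mem[OF c1] by blast
      then have "c = ?E``{i}" using True eclass_eqI2[of i X n x a] by simp
      then show ?thesis by simp
    next
      case False
      have "\<forall>j\<in>c. j < i"
      proof
        fix j assume j: "j \<in> c"
        have "j < Suc i" using c2 j by blast
        moreover have "j \<noteq> i" using False j by blast
        ultimately show "j < i" by linarith
      qed
      then show ?thesis using c1 by blast
    qed
  qed
  then have "card {c \<in> eclasses X n x. \<forall>j\<in>c. j < Suc i} \<le> card (insert (?E``{i}) {c \<in> eclasses X n x. \<forall>j\<in>c. j < i})"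
    by (rule card_mono[rotated]) (simp add: eclasses_finite)
  also have "\<dots> \<le> Suc (card {c \<in> eclasses X n x. \<forall>j\<in>c. j < i})"
  proof -
    have fin: "finite {c \<in> eclasses X n x. \<forall>j\<in>c. j < i}" by (simp add: eclasses_finite)
    show ?thesis unfolding card_insert_if[OF fin] by simp
  qed
  finally have *: "card {c \<in> eclasses X n x. \<forall>j\<in>c. j < Suc i} \<le> Suc (card {c \<in> eclasses X n x. \<forall>j\<in>c. j < i})" .
  have e1: "rho X n x (Suc i) = card {c \<in> eclasses X n x. \<forall>j\<in>c. j < Suc i}"
    using assms unfolding rho_def by (simp only: Suc_leI if_True)
  have e2: "rho X n x i = card {c \<in> eclasses X n x. \<forall>j\<in>c. j < i}"
    using assms unfolding rho_def by (simp only: less_imp_le if_True)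
  show ?thesis using * unfolding e1 e2 .
qed

lemma rho_n: "rho X n x n = mdeg X n x"
proof -
  let ?E = "eeq X n x"
  have eq: "{c \<in> eclasses X n x. \<forall>j\<in>c. j < n} = eclasses X n x - {?E``{n}}"
  proof (intro equalityI subsetI)
    fix c assume c: "c \<in> {c \<in> eclasses X n x. \<forall>j\<in>c. j < n}"
    then have c1: "c \<in> eclasses X n x" and c2: "\<forall>j\<in>c. j < n" by simp_all
    have "n \<in> ?E``{n}" by (rule eclass_self)
    then have "c \<noteq> ?E``{n}" using c2 by blast
    then show "c \<in> eclasses X n x - {?E``{n}}" using c1 by simp
  next
    fix c assume c0: "c \<in> eclasses X n x - {?E``{n}}"
    then have c1: "c \<in> eclasses X n x" and c3: "c \<noteq> ?E``{n}" by simp_all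
    obtain a where a: "a \<le> n" "c = ?E``{a}" using eclass_mem[OF c1] by blast
    have "\<forall>j\<in>c. j < n"
    proof
      fix j assume j: "j \<in> c"
      have "j \<le> n" using j a eclass_sub[of a n j X x] by simp
      moreover have "j \<noteq> n"
      proof
        assume "j = n"
        then have "c = ?E``{n}" using j a eclass_eqI2[of n X n x a] by simp
        with c3 show False by simp
      qed
      ultimately show "j < n" by simp
    qed
    then show "c \<in> {c \<in> eclasses X n x. \<forall>j\<in>c. j < n}" using c1 by simp
  qed
  have mem: "?E``{n} \<in> eclasses X n x" by (rule eclass_in) simp
  have "rho X n x n = card {c \<in> eclasses X n x. \<forall>j\<in>c. j < n}"
    unfolding rho_def by simp
  also have "\<dots> = card (eclasses X n x) - 1"
    unfolding eq by (rule card_Diff_singleton[OF mem])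
  finally show ?thesis unfolding mdeg_def .
qed

lemma rho_le: assumes "i \<le> n" shows "rho X n x i \<le> mdeg X n x"
proof -
  have "rho X n x i \<le> rho X n x n" using assms by (rule rho_mono) simp
  then show ?thesis unfolding rho_n .
qed

lemma rho_split:
  assumes "c < n" "rho X n x (Suc c) = rho X n x c"
  shows "(c, Suc c) \<in> eeq X n x"
proof (rule ccontr)
  let ?E = "eeq X n x"
  assume nc: "(c, Suc c) \<notin> ?E"
  have sub: "\<forall>j\<in>?E``{c}. j < Suc c"
  proof
    fix d assume d: "d \<in> ?E``{c}"
    then have cd: "(c, d) \<in> ?E" by simp
    show "d < Suc c"
    proof (rule ccontr)
      assume nd: "\<not> d < Suc c"
      have "\<exists>i j. i < Suc c \<and> Suc c \<le> j \<and> j \<le> n \<and> esim X n x i j"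
      proof (rule ccontr)
        assume "\<not> (\<exists>i j. i < Suc c \<and> Suc c \<le> j \<and> j \<le> n \<and> esim X n x i j)"
        from eeq_cut[OF cd this] have "(c < Suc c) = (d < Suc c)" .
        with nd show False by simp
      qed
      then obtain i j where ij: "i < Suc c" "Suc c \<le> j" "j \<le> n" "esim X n x i j"
        by blast
      have ic: "i \<le> c" using ij(1) by simp
      have cj: "c \<le> j" using ij(2) by simp
      have "(i, c) \<in> eapprox X n x" using eapproxI[OF ic cj ij(3,4)] .
      moreover have "(i, Suc c) \<in> eapprox X n x" using eapproxI[OF _ ij(2,3,4)] ic by simp
      ultimately have "(i, c) \<in> eapprox X n x \<union> (eapprox X n x)\<inverse>" "(c, i) \<in> eapprox X n x \<union> (eapprox X n x)\<inverse>" "(i, Suc c) \<in> eapprox X n x \<union> (eapprox X n x)\<inverse>"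
        by simp_all
      then have "(c, i) \<in> ?E" "(i, Suc c) \<in> ?E" unfolding eeq_def by (simp_all only: r_into_rtrancl)
      then have "(c, Suc c) \<in> ?E" unfolding eeq_def by (rule rtrancl_trans)
      with nc show False by simp
    qed
  qed
  have A: "?E``{c} \<in> {c' \<in> eclasses X n x. \<forall>j\<in>c'. j < Suc c}"
  proof (rule CollectI, rule conjI)
    show "?E``{c} \<in> eclasses X n x" using assms(1) by (intro eclass_in) simp
  qed (rule sub)
  have B: "?E``{c} \<notin> {c' \<in> eclasses X n x. \<forall>j\<in>c'. j < c}"
  proof
    assume "?E``{c} \<in> {c' \<in> eclasses X n x. \<forall>j\<in>c'. j < c}"
    then have "\<forall>j\<in>?E``{c}. j < c" by simp
    with eclass_self[of c X n x] show False by blast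
  qed
  have "{c' \<in> eclasses X n x. \<forall>j\<in>c'. j < c} \<subseteq> {c' \<in> eclasses X n x. \<forall>j\<in>c'. j < Suc c}"
    by auto
  moreover have "{c' \<in> eclasses X n x. \<forall>j\<in>c'. j < c} \<noteq> {c' \<in> eclasses X n x. \<forall>j\<in>c'. j < Suc c}"
  proof
    assume eq: "{c' \<in> eclasses X n x. \<forall>j\<in>c'. j < c} = {c' \<in> eclasses X n x. \<forall>j\<in>c'. j < Suc c}"
    from A B show False unfolding eq by contradiction
  qed
  ultimately have "{c' \<in> eclasses X n x. \<forall>j\<in>c'. j < c} \<subset> {c' \<in> eclasses X n x. \<forall>j\<in>c'. j < Suc c}"
    by (rule psubsetI)
  then have "card {c' \<in> eclasses X n x. \<forall>j\<in>c'. j < c} < card {c' \<in> eclasses X n x. \<forall>j\<in>c'. j < Suc c}"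
    by (rule psubset_card_mono[rotated]) (simp add: eclasses_finite)
  moreover have "rho X n x c = card {c' \<in> eclasses X n x. \<forall>j\<in>c'. j < c}"
    using assms(1) unfolding rho_def by simp
  moreover have "rho X n x (Suc c) = card {c' \<in> eclasses X n x. \<forall>j\<in>c'. j < Suc c}"
    using assms(1) unfolding rho_def by simp
  ultimately show False using assms(2) by linarith
qed

lemma rho_eq_eeq:
  assumes ab: "a \<le> b" and bn: "b \<le> n" and r: "rho X n x a = rho X n x b"
  shows "(a, b) \<in> eeq X n x"
  using ab
proof (induction b rule: dec_induct)
  case base
  show ?case unfolding eeq_def by (rule rtrancl_refl)
next
  case (step k)
  have kn: "k < n" using step.hyps(2) bn by linarith
  have r1: "rho X n x a \<le> rho X n x k" by (rule rho_mono) (use step.hyps(1) kn in linarith)+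
  have r2: "rho X n x k \<le> rho X n x (Suc k)" by (rule rho_mono) (use kn in linarith)+
  have r3: "rho X n x (Suc k) \<le> rho X n x b" by (rule rho_mono) (use step.hyps(2) bn in linarith)+
  have "rho X n x (Suc k) = rho X n x k" using r1 r2 r3 r by linarith
  with kn have "(k, Suc k) \<in> eeq X n x" by (rule rho_split)
  with step.IH show ?case unfolding eeq_def by (rule rtrancl_trans)
qed

lemma rho_eq_eeq2:
  assumes an: "a \<le> n" and bn: "b \<le> n" and r: "rho X n x a = rho X n x b"
  shows "(a, b) \<in> eeq X n x"
proof (cases "a \<le> b")
  case True then show ?thesis using bn r by (rule rho_eq_eeq)
next
  case False
  then have ba: "b \<le> a" by simp
  from r have r': "rho X n x b = rho X n x a" by (rule sym)
  have "(b, a) \<in> eeq X n x" using ba an r' by (rule rho_eq_eeq)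
  moreover have "sym (eeq X n x)" using eeq_equiv[of X n x] unfolding equiv_def by (elim conjE)
  ultimately show ?thesis by (rule symD[rotated])
qed

lemma discrete_ivt:
  fixes h :: "nat \<Rightarrow> nat"
  assumes "\<forall>i<N. h (Suc i) \<le> Suc (h i)" "h 0 = 0" "v \<le> h N"
  shows "\<exists>t\<le>N. h t = v"
  using assms
proof (induction N)
  case 0
  then have "h 0 = v" by linarith
  then show ?case by (intro exI[of _ 0]) simp
next
  case (Suc N)
  show ?case
  proof (cases "v \<le> h N")
    case True
    have "\<forall>i<N. h (Suc i) \<le> Suc (h i)" using Suc.prems(1) by simp
    from Suc.IH[OF this Suc.prems(2) True] obtain t where "t \<le> N" "h t = v" by (elim exE conjE)
    then show ?thesis by (intro exI[of _ t]) simp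
  next
    case False
    have "h (Suc N) \<le> Suc (h N)" using Suc.prems(1) by simp
    then have "h (Suc N) = v" using Suc.prems(3) False by linarith
    then show ?thesis by (intro exI[of _ "Suc N"]) simp
  qed
qed

lemma rho_ivt: assumes "t' \<le> n" "v \<le> rho X n x t'" shows "\<exists>t\<le>t'. rho X n x t = v"
proof (rule discrete_ivt)
  show "\<forall>i<t'. rho X n x (Suc i) \<le> Suc (rho X n x i)"
  proof (intro allI impI)
    fix i assume "i < t'" then have "i < n" using assms(1) by linarith
    then show "rho X n x (Suc i) \<le> Suc (rho X n x i)" by (rule rho_step)
  qed
  show "rho X n x 0 = 0" by (rule rho_0)
  show "v \<le> rho X n x t'" by (rule assms(2))
qed

lemma rho_surj: assumes "v \<le> mdeg X n x" shows "\<exists>t\<le>n. rho X n x t = v"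
proof -
  have "v \<le> rho X n x n" unfolding rho_n by (rule assms)
  then show ?thesis by (intro rho_ivt) simp_all
qed



lemma sset_closed: "sset X \<Longrightarrow> opr m n \<alpha> \<Longrightarrow> x \<in> sx X n \<Longrightarrow> sop X n m \<alpha> x \<in> sx X m"
  unfolding sset_def by blast

lemma sset_id: "sset X \<Longrightarrow> x \<in> sx X n \<Longrightarrow> sop X n n id x = x"
  unfolding sset_def by blast

lemma sset_comp: "sset X \<Longrightarrow> opr m n \<alpha> \<Longrightarrow> opr k m \<beta> \<Longrightarrow> x \<in> sx X n \<Longrightarrow>
    sop X m k \<beta> (sop X n m \<alpha> x) = sop X n k (\<alpha> \<circ> \<beta>) x"
  unfolding sset_def by blast

lemma sset_cong: "sset X \<Longrightarrow> (\<And>i. i \<le> m \<Longrightarrow> \<alpha> i = \<alpha>' i) \<Longrightarrow> x \<in> sx X n \<Longrightarrow>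
    sop X n m \<alpha> x = sop X n m \<alpha>' x"
  unfolding sset_def by blast

lemma opr_comp: "opr n m \<sigma> \<Longrightarrow> opr m k \<tau> \<Longrightarrow> opr n k (\<tau> \<circ> \<sigma>)"
  unfolding opr_def by (simp add: le_trans)

lemma opr_id: "opr n n id"
  unfolding opr_def by simp

lemma opr_const: "v \<le> n \<Longrightarrow> opr 0 n (\<lambda>_. v)"
  unfolding opr_def by simp

lemma opr_le: "opr m n \<alpha> \<Longrightarrow> i \<le> m \<Longrightarrow> \<alpha> i \<le> n"
  unfolding opr_def by blast

lemma opr_mono: "opr m n \<alpha> \<Longrightarrow> i \<le> j \<Longrightarrow> j \<le> m \<Longrightarrow> \<alpha> i \<le> \<alpha> j"
  unfolding opr_def by blast

lemma qrel_equiv: "qrel X R \<Longrightarrow> equiv (sx X n) (R n)"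
  unfolding qrel_def by blast

lemma qrel_op: "qrel X R \<Longrightarrow> opr m n \<alpha> \<Longrightarrow> (x,y) \<in> R n \<Longrightarrow> (sop X n m \<alpha> x, sop X n m \<alpha> y) \<in> R m"
  unfolding qrel_def by blast

lemma quot_sop:
  assumes X: "sset X" and R: "qrel X R" and x: "x \<in> sx X n" and a: "opr m n \<alpha>"
  shows "sop (quot X R) n m \<alpha> (R n``{x}) = R m``{sop X n m \<alpha> x}"
proof -
  have eq: "equiv (sx X n) (R n)" using R by (rule qrel_equiv)
  have "x \<in> R n``{x}" using eq x by (rule equiv_class_self)
  then have z: "(SOME z. z \<in> R n``{x}) \<in> R n``{x}" by (rule someI)
  then have "(x, SOME z. z \<in> R n``{x}) \<in> R n" by simp
  then have "(sop X n m \<alpha> x, sop X n m \<alpha> (SOME z. z \<in> R n``{x})) \<in> R m"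
    using R a by (intro qrel_op)
  then have "R m``{sop X n m \<alpha> x} = R m``{sop X n m \<alpha> (SOME z. z \<in> R n``{x})}"
    using qrel_equiv[OF R] by (intro equiv_class_eq)
  then show ?thesis unfolding quot_def by simp
qed

lemma quot_sx: "sx (quot X R) n = sx X n // R n"
  unfolding quot_def by simp

lemma quot_sset:
  assumes X: "sset X" and R: "qrel X R"
  shows "sset (quot X R)"
  unfolding sset_def
proof (intro conjI allI impI)
  fix n m \<alpha> c assume a: "opr m n \<alpha>" and c: "c \<in> sx (quot X R) n"
  from c obtain x where x: "x \<in> sx X n" and cx: "c = R n``{x}" unfolding quot_sx by (elim quotientE)
  have "sop X n m \<alpha> x \<in> sx X m" using X a x by (rule sset_closed)
  then show "sop (quot X R) n m \<alpha> c \<in> sx (quot X R) m"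
    unfolding cx quot_sop[OF X R x a] quot_sx by (rule quotientI)
next
  fix n c assume c: "c \<in> sx (quot X R) n"
  from c obtain x where x: "x \<in> sx X n" and cx: "c = R n``{x}" unfolding quot_sx by (elim quotientE)
  show "sop (quot X R) n n id c = c"
    unfolding cx quot_sop[OF X R x opr_id] sset_id[OF X x] ..
next
  fix n m k \<alpha> \<beta> c assume a: "opr m n \<alpha>" and b: "opr k m \<beta>" and c: "c \<in> sx (quot X R) n"
  from c obtain x where x: "x \<in> sx X n" and cx: "c = R n``{x}" unfolding quot_sx by (elim quotientE)
  have xa: "sop X n m \<alpha> x \<in> sx X m" using X a x by (rule sset_closed)
  have ab: "opr k n (\<alpha> \<circ> \<beta>)" using b a by (rule opr_comp)
  show "sop (quot X R) m k \<beta> (sop (quot X R) n m \<alpha> c) = sop (quot X R) n k (\<alpha> \<circ> \<beta>) c"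
    unfolding cx quot_sop[OF X R x a] quot_sop[OF X R xa b] quot_sop[OF X R x ab] sset_comp[OF X a b x] ..
next
  fix n m :: nat and \<alpha> \<alpha>' :: "nat \<Rightarrow> nat" and c assume e: "\<forall>i\<le>m. \<alpha> i = \<alpha>' i" and c: "c \<in> sx (quot X R) n"
  from c obtain x where x: "x \<in> sx X n" and cx: "c = R n``{x}" unfolding quot_sx by (elim quotientE)
  have "x \<in> R n``{x}" using qrel_equiv[OF R] x by (rule equiv_class_self)
  then have "(SOME z. z \<in> c) \<in> c" unfolding cx by (rule someI)
  then have "(x, SOME z. z \<in> c) \<in> R n" unfolding cx by simp
  then have z: "(SOME z. z \<in> c) \<in> sx X n" using qrel_equiv[OF R, of n] unfolding equiv_def refl_on_def by blast
  have "sop X n m \<alpha> (SOME z. z \<in> c) = sop X n m \<alpha>' (SOME z. z \<in> c)"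
    using X _ z by (rule sset_cong) (use e in blast)
  then show "sop (quot X R) n m \<alpha> c = sop (quot X R) n m \<alpha>' c"
    unfolding quot_def by simp
qed

lemma ez:
  assumes Z: "sset Z"
  shows "z \<in> sx Z n \<Longrightarrow> \<exists>m \<sigma> d. opr n m \<sigma> \<and> (m, d) \<in> nondeg Z \<and> z = sop Z m n \<sigma> d"
proof (induction n arbitrary: z rule: less_induct)
  case (less n)
  show ?case
  proof (cases "degenerate Z n z")
    case False
    then have "(n, z) \<in> nondeg Z" using less.prems unfolding nondeg_def by simp
    moreover have "z = sop Z n n id z" using Z less.prems by (rule sset_id[symmetric])
    ultimately show ?thesis using opr_id by blast
  next
    case True
    then obtain m \<sigma> y where m: "m < n" and s: "opr n m \<sigma>" and y: "y \<in> sx Z m" and zy: "z = sop Z m n \<sigma> y"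
      unfolding degenerate_def by blast
    from less.IH[OF m y] obtain m' \<tau> d where t: "opr m m' \<tau>" and d: "(m', d) \<in> nondeg Z" and yd: "y = sop Z m' m \<tau> d"
      by blast
    have dZ: "d \<in> sx Z m'" using d unfolding nondeg_def by simp
    have "z = sop Z m' n (\<tau> \<circ> \<sigma>) d" unfolding zy yd using Z t s dZ by (rule sset_comp)
    moreover have "opr n m' (\<tau> \<circ> \<sigma>)" using s t by (rule opr_comp)
    ultimately show ?thesis using d by blast
  qed
qed



lemma cut0_delta: "v \<le> m \<Longrightarrow> cut 0 (\<lambda>_. v) \<in> sx (delta m) 0"
  unfolding delta_def cut_def opr_def by simp

lemma key:
  assumes X: "sset X" and G: "goodrel X R" and x: "x \<in> sx X n"
    and a: "opr k n \<alpha>" and a': "opr k n \<alpha>'"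
    and r: "\<And>i. i \<le> k \<Longrightarrow> rho X n x (\<alpha> i) = rho X n x (\<alpha>' i)"
  shows "(sop X n k \<alpha> x, sop X n k \<alpha>' x) \<in> R k"
proof -
  let ?Z = "quot X R"
  have R: "qrel X R" using G unfolding goodrel_def by simp
  have NS: "nonsingular ?Z" using G unfolding goodrel_def by simp
  have Z: "sset ?Z" using X R by (rule quot_sset)
  have cZ: "R n``{x} \<in> sx ?Z n" unfolding quot_sx using x by (rule quotientI)
  from ez[OF Z cZ] obtain m \<sigma> d where s: "opr n m \<sigma>" and d: "(m, d) \<in> nondeg ?Z"
    and cd: "R n``{x} = sop ?Z m n \<sigma> d" by blast
  have dZ: "d \<in> sx ?Z m" using d unfolding nondeg_def by simp
  have inj: "inj_on (\<lambda>\<beta>. sop ?Z m 0 \<beta> d) (sx (delta m) 0)"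
    using NS d unfolding nonsingular_def by blast
  have vert: "sop ?Z m 0 (\<lambda>_. \<sigma> i) d = R 0``{sop X n 0 (\<lambda>_. i) x}" if i: "i \<le> n" for i
  proof -
    have ci: "opr 0 n (\<lambda>_. i)" using i by (rule opr_const)
    have "R 0``{sop X n 0 (\<lambda>_. i) x} = sop ?Z n 0 (\<lambda>_. i) (R n``{x})"
      by (rule quot_sop[OF X R x ci, symmetric])
    also have "\<dots> = sop ?Z m 0 (\<sigma> \<circ> (\<lambda>_. i)) d" unfolding cd using Z s ci dZ by (rule sset_comp)
    also have "\<sigma> \<circ> (\<lambda>_. i) = (\<lambda>_. \<sigma> i)" by (rule ext) simp
    finally show ?thesis by (rule sym)
  qed
  have vtx: "sop ?Z m 0 (\<lambda>_. v) d = sop ?Z m 0 (cut 0 (\<lambda>_. v)) d" for v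
    using Z _ dZ by (rule sset_cong) (simp add: cut_def)
  have esim_eq: "\<sigma> i = \<sigma> j" if i: "i \<le> n" and j: "j \<le> n" and e: "esim X n x i j" for i j
  proof -
    have "sop ?Z m 0 (\<lambda>_. \<sigma> i) d = sop ?Z m 0 (\<lambda>_. \<sigma> j) d"
      unfolding vert[OF i] vert[OF j] using e unfolding esim_def by simp
    then have e1: "sop ?Z m 0 (cut 0 (\<lambda>_. \<sigma> i)) d = sop ?Z m 0 (cut 0 (\<lambda>_. \<sigma> j)) d"
      unfolding vtx .
    have m1: "cut 0 (\<lambda>_. \<sigma> i) \<in> sx (delta m) 0" using opr_le[OF s i] by (rule cut0_delta)
    have m2: "cut 0 (\<lambda>_. \<sigma> j) \<in> sx (delta m) 0" using opr_le[OF s j] by (rule cut0_delta)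
    have "cut 0 (\<lambda>_. \<sigma> i) = cut 0 (\<lambda>_. \<sigma> j)" by (rule inj_onD[OF inj e1 m1 m2])
    then have "cut 0 (\<lambda>_. \<sigma> i) 0 = cut 0 (\<lambda>_. \<sigma> j) 0" by (rule arg_cong)
    then show ?thesis unfolding cut_def by simp
  qed
  have app: "\<sigma> i = \<sigma> k'" if "(i, k') \<in> eapprox X n x" for i k'
  proof -
    from that obtain j where ij: "i \<le> k'" "k' \<le> j" "j \<le> n" "esim X n x i j"
      unfolding eapprox_def by blast
    have in': "i \<le> n" "k' \<le> n" using ij by linarith+
    have "\<sigma> i = \<sigma> j" using in'(1) ij(3) ij(4) by (rule esim_eq)
    moreover have "\<sigma> i \<le> \<sigma> k'" using s ij(1) in'(2) by (rule opr_mono)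
    moreover have "\<sigma> k' \<le> \<sigma> j" using s ij(2) ij(3) by (rule opr_mono)
    ultimately show ?thesis by linarith
  qed
  have eeqs: "\<sigma> a1 = \<sigma> b1" if "(a1, b1) \<in> eeq X n x" for a1 b1
    using that unfolding eeq_def
  proof (induction rule: rtrancl_induct)
    case base show ?case by (rule refl)
  next
    case (step y z)
    from step.hyps(2) have "\<sigma> y = \<sigma> z"
    proof
      assume "(y, z) \<in> eapprox X n x" then show ?thesis by (rule app)
    next
      assume "(y, z) \<in> (eapprox X n x)\<inverse>" then have "(z, y) \<in> eapprox X n x" by simp
      then show ?thesis by (rule app[THEN sym])
    qed
    with step.IH show ?case by (rule trans)
  qed
  have agree: "(\<sigma> \<circ> \<alpha>) i = (\<sigma> \<circ> \<alpha>') i" if i: "i \<le> k" for i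
  proof -
    have "(\<alpha> i, \<alpha>' i) \<in> eeq X n x"
      using opr_le[OF a i] opr_le[OF a' i] r[OF i] by (rule rho_eq_eeq2)
    then show ?thesis unfolding comp_def by (rule eeqs)
  qed
  have xa: "sop X n k \<alpha> x \<in> sx X k" using X a x by (rule sset_closed)
  have xa': "sop X n k \<alpha>' x \<in> sx X k" using X a' x by (rule sset_closed)
  have "R k``{sop X n k \<alpha> x} = sop ?Z n k \<alpha> (R n``{x})" by (rule quot_sop[OF X R x a, symmetric])
  also have "\<dots> = sop ?Z m k (\<sigma> \<circ> \<alpha>) d" unfolding cd using Z s a dZ by (rule sset_comp)
  also have "\<dots> = sop ?Z m k (\<sigma> \<circ> \<alpha>') d" using Z agree dZ by (rule sset_cong)
  also have "\<dots> = sop ?Z n k \<alpha>' (R n``{x})" unfolding cd using Z s a' dZ by (rule sset_comp[symmetric])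
  also have "\<dots> = R k``{sop X n k \<alpha>' x}" by (rule quot_sop[OF X R x a'])
  finally have "R k``{sop X n k \<alpha> x} = R k``{sop X n k \<alpha>' x}" .
  then show ?thesis using qrel_equiv[OF R] xa' by (rule eq_equiv_class)
qed

lemma desing_sop:
  assumes X: "sset X" and x: "x \<in> sx X n" and a: "opr m n \<alpha>"
  shows "sop (desing X) n m \<alpha> (eta X n x) = eta X m (sop X n m \<alpha> x)"
proof (rule ext)
  fix R
  show "sop (desing X) n m \<alpha> (eta X n x) R = eta X m (sop X n m \<alpha> x) R"
  proof (cases "goodrel X R")
    case True
    then have R: "qrel X R" unfolding goodrel_def by simp
    show ?thesis using True unfolding desing_def eta_def by (simp add: quot_sop[OF X R x a])
  next
    case False then show ?thesis unfolding desing_def eta_def by simp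
  qed
qed



definition poG :: "'b sset \<Rightarrow> 'c sset \<Rightarrow> 'a sset \<Rightarrow> (nat \<Rightarrow> 'c \<Rightarrow> 'b) \<Rightarrow> (nat \<Rightarrow> 'c \<Rightarrow> 'a)
     \<Rightarrow> nat \<Rightarrow> (('b + 'a) \<times> ('b + 'a)) set" where
  "poG B C X g f n = {(Inl (g n c), Inr (f n c)) | c. c \<in> sx C n}"

definition lift :: "'b sset \<Rightarrow> 'a sset \<Rightarrow> nat \<Rightarrow> nat \<Rightarrow> (nat \<Rightarrow> nat) \<Rightarrow> 'b + 'a \<Rightarrow> 'b + 'a" where
  "lift B X n m \<alpha> u = (case u of Inl b \<Rightarrow> Inl (sop B n m \<alpha> b) | Inr x \<Rightarrow> Inr (sop X n m \<alpha> x))"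

definition closed :: "'a sset \<Rightarrow> bool" where
  "closed X \<longleftrightarrow> (\<forall>n m \<alpha> x. opr m n \<alpha> \<longrightarrow> x \<in> sx X n \<longrightarrow> sop X n m \<alpha> x \<in> sx X m)"

lemma closedD: "closed X \<Longrightarrow> opr m n \<alpha> \<Longrightarrow> x \<in> sx X n \<Longrightarrow> sop X n m \<alpha> x \<in> sx X m"
  unfolding closed_def by blast

lemma sset_closed': "sset X \<Longrightarrow> closed X"
  by (simp add: closed_def sset_closed)

lemma smap_in: "smap X Y f \<Longrightarrow> x \<in> sx X n \<Longrightarrow> f n x \<in> sx Y n"
  unfolding smap_def by blast

lemma smap_nat: "smap X Y f \<Longrightarrow> opr m n \<alpha> \<Longrightarrow> x \<in> sx X n \<Longrightarrow> f m (sop X n m \<alpha> x) = sop Y n m \<alpha> (f n x)"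
  unfolding smap_def by blast

lemma po_rel_eq: "po_rel B C X g f n = ((poG B C X g f n) \<union> (poG B C X g f n)\<inverse>)\<^sup>* \<inter> ((sx B n <+> sx X n) \<times> (sx B n <+> sx X n))"
  unfolding po_rel_def poG_def Let_def ..

lemma poG_sub:
  assumes g: "smap C B g" and f: "smap C X f"
  shows "poG B C X g f n \<subseteq> (sx B n <+> sx X n) \<times> (sx B n <+> sx X n)"
proof
  fix p assume "p \<in> poG B C X g f n"
  then obtain c where c: "c \<in> sx C n" and p: "p = (Inl (g n c), Inr (f n c))" unfolding poG_def by blast
  have "g n c \<in> sx B n" using g c by (rule smap_in)
  moreover have "f n c \<in> sx X n" using f c by (rule smap_in)
  ultimately show "p \<in> (sx B n <+> sx X n) \<times> (sx B n <+> sx X n)" unfolding p by blast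
qed

lemma po_equiv:
  assumes g: "smap C B g" and f: "smap C X f"
  shows "equiv (sx B n <+> sx X n) (po_rel B C X g f n)"
  unfolding po_rel_eq
proof (rule equivI)
  let ?D = "sx B n <+> sx X n" and ?G = "poG B C X g f n"
  show "(?G \<union> ?G\<inverse>)\<^sup>* \<inter> ?D \<times> ?D \<subseteq> ?D \<times> ?D" by (rule Int_lower2)
  show "refl_on ?D ((?G \<union> ?G\<inverse>)\<^sup>* \<inter> ?D \<times> ?D)" unfolding refl_on_def by blast
  have s1: "sym ((?G \<union> ?G\<inverse>)\<^sup>*)" by (intro sym_rtrancl sym_Un_converse)
  have s2: "sym (?D \<times> ?D)" unfolding sym_def by blast
  show "sym ((?G \<union> ?G\<inverse>)\<^sup>* \<inter> ?D \<times> ?D)" using s1 s2 by (rule sym_Int)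
  have t1: "trans ((?G \<union> ?G\<inverse>)\<^sup>*)" by (rule trans_rtrancl)
  have t2: "trans (?D \<times> ?D)" unfolding trans_def by blast
  show "trans ((?G \<union> ?G\<inverse>)\<^sup>* \<inter> ?D \<times> ?D)" using t1 t2 by (rule trans_Int)
qed

lemma lift_D:
  assumes B: "closed B" and X: "closed X" and a: "opr m n \<alpha>" and u: "u \<in> sx B n <+> sx X n"
  shows "lift B X n m \<alpha> u \<in> sx B m <+> sx X m"
proof -
  from u consider (l) b where "u = Inl b" "b \<in> sx B n" | (r) x where "u = Inr x" "x \<in> sx X n" by blast
  then show ?thesis
  proof cases
    case l
    have "sop B n m \<alpha> b \<in> sx B m" using B a l(2) by (rule closedD)
    then show ?thesis unfolding l(1) lift_def sum.case by (rule InlI)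
  next
    case r
    have "sop X n m \<alpha> x \<in> sx X m" using X a r(2) by (rule closedD)
    then show ?thesis unfolding r(1) lift_def sum.case by (rule InrI)
  qed
qed

lemma lift_G:
  assumes C: "closed C" and g: "smap C B g" and f: "smap C X f" and a: "opr m n \<alpha>"
    and p: "(y, z) \<in> poG B C X g f n"
  shows "(lift B X n m \<alpha> y, lift B X n m \<alpha> z) \<in> poG B C X g f m"
proof -
  from p obtain c where c: "c \<in> sx C n" and y: "y = Inl (g n c)" and z: "z = Inr (f n c)"
    unfolding poG_def by blast
  have c': "sop C n m \<alpha> c \<in> sx C m" using C a c by (rule closedD)
  have "lift B X n m \<alpha> y = Inl (g m (sop C n m \<alpha> c))"
    unfolding y lift_def using smap_nat[OF g a c] by simp
  moreover have "lift B X n m \<alpha> z = Inr (f m (sop C n m \<alpha> c))"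
    unfolding z lift_def using smap_nat[OF f a c] by simp
  ultimately show ?thesis unfolding poG_def using c' by blast
qed

lemma po_nat:
  assumes B: "closed B" and C: "closed C" and X: "closed X" and g: "smap C B g" and f: "smap C X f"
    and a: "opr m n \<alpha>" and uv: "(u, v) \<in> po_rel B C X g f n"
  shows "(lift B X n m \<alpha> u, lift B X n m \<alpha> v) \<in> po_rel B C X g f m"
proof -
  let ?G = "poG B C X g f n" and ?G' = "poG B C X g f m"
  from uv have r: "(u, v) \<in> (?G \<union> ?G\<inverse>)\<^sup>*" and uD: "u \<in> sx B n <+> sx X n" and vD: "v \<in> sx B n <+> sx X n"
    unfolding po_rel_eq by blast+
  have "(lift B X n m \<alpha> u, lift B X n m \<alpha> v) \<in> (?G' \<union> ?G'\<inverse>)\<^sup>*"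
    using r
  proof (induction rule: rtrancl_induct)
    case base show ?case by (rule rtrancl_refl)
  next
    case (step y z)
    from step.hyps(2) have "(lift B X n m \<alpha> y, lift B X n m \<alpha> z) \<in> ?G' \<union> ?G'\<inverse>"
    proof
      assume "(y, z) \<in> ?G"
      then have "(lift B X n m \<alpha> y, lift B X n m \<alpha> z) \<in> ?G'" using lift_G[OF C g f a] by blast
      then show ?thesis by (rule UnI1)
    next
      assume "(y, z) \<in> ?G\<inverse>"
      then have "(z, y) \<in> ?G" by simp
      then have "(lift B X n m \<alpha> z, lift B X n m \<alpha> y) \<in> ?G'" using lift_G[OF C g f a] by blast
      then show ?thesis by simp
    qed
    with step.IH show ?case by (rule rtrancl_into_rtrancl)
  qed
  moreover have "lift B X n m \<alpha> u \<in> sx B m <+> sx X m" using B X a uD by (rule lift_D)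
  moreover have "lift B X n m \<alpha> v \<in> sx B m <+> sx X m" using B X a vD by (rule lift_D)
  ultimately show ?thesis unfolding po_rel_eq by blast
qed

lemma po_sop:
  assumes B: "closed B" and C: "closed C" and X: "closed X" and g: "smap C B g" and f: "smap C X f"
    and a: "opr m n \<alpha>" and u: "u \<in> sx B n <+> sx X n"
  shows "sop (pushout B C X g f) n m \<alpha> (po_rel B C X g f n `` {u}) = po_rel B C X g f m `` {lift B X n m \<alpha> u}"
proof -
  let ?P = "po_rel B C X g f"
  have "u \<in> ?P n``{u}" using po_equiv[OF g f] u by (rule equiv_class_self)
  then have z: "(SOME z. z \<in> ?P n``{u}) \<in> ?P n``{u}" by (rule someI)
  then have "(u, SOME z. z \<in> ?P n``{u}) \<in> ?P n" by simp
  then have "(lift B X n m \<alpha> u, lift B X n m \<alpha> (SOME z. z \<in> ?P n``{u})) \<in> ?P m"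
    by (rule po_nat[OF B C X g f a])
  then have "?P m``{lift B X n m \<alpha> u} = ?P m``{lift B X n m \<alpha> (SOME z. z \<in> ?P n``{u})}"
    using po_equiv[OF g f] by (intro equiv_class_eq)
  then show ?thesis unfolding pushout_def lift_def by simp
qed

lemma pushout_sx: "sx (pushout B C X g f) n = (sx B n <+> sx X n) // po_rel B C X g f n"
  unfolding pushout_def by simp



lemma delta_sx: "sx (delta N) k = {\<alpha>. opr k N \<alpha> \<and> (\<forall>i>k. \<alpha> i = 0)}"
  unfolding delta_def by simp

lemma delta_opr: "a \<in> sx (delta N) n \<Longrightarrow> opr n N a"
  unfolding delta_sx by simp

lemma cut_delta: "(\<And>i. i \<le> k \<Longrightarrow> a i \<le> N) \<Longrightarrow> (\<And>i j. i \<le> j \<Longrightarrow> j \<le> k \<Longrightarrow> a i \<le> a j)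
   \<Longrightarrow> cut k a \<in> sx (delta N) k"
  unfolding delta_sx opr_def cut_def by simp

lemma delta_closed: assumes a: "a \<in> sx (delta N) n" and b: "opr m n \<beta>"
  shows "cut m (a \<circ> \<beta>) \<in> sx (delta N) m"
proof (rule cut_delta)
  have an: "opr n N a" using a by (rule delta_opr)
  fix i assume i: "i \<le> m"
  have "\<beta> i \<le> n" using b i by (rule opr_le)
  then show "(a \<circ> \<beta>) i \<le> N" unfolding comp_def using an by (rule opr_le[rotated])
next
  have an: "opr n N a" using a by (rule delta_opr)
  fix i j assume ij: "i \<le> j" "j \<le> m"
  have "\<beta> i \<le> \<beta> j" using b ij by (rule opr_mono)
  moreover have "\<beta> j \<le> n" using b ij(2) by (rule opr_le)
  ultimately show "(a \<circ> \<beta>) i \<le> (a \<circ> \<beta>) j" unfolding comp_def by (rule opr_mono[OF an])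
qed

lemma coprod_sx: "sx (coprod_delta S d) k = {(s, \<alpha>). s \<in> S \<and> \<alpha> \<in> sx (delta (d s)) k}"
  unfolding coprod_delta_def by simp

lemma coprod_sop: "sop (coprod_delta S d) n m \<beta> (s, \<alpha>) = (s, cut m (\<alpha> \<circ> \<beta>))"
  unfolding coprod_delta_def by simp

lemma coprod_closed: "closed (coprod_delta S d)"
  unfolding closed_def
proof (intro allI impI)
  fix n m \<beta> c assume b: "opr m n \<beta>" and c: "c \<in> sx (coprod_delta S d) n"
  obtain s \<alpha> where cs: "c = (s, \<alpha>)" by (cases c)
  from c have s: "s \<in> S" and a: "\<alpha> \<in> sx (delta (d s)) n" unfolding cs coprod_sx by simp_all
  have "cut m (\<alpha> \<circ> \<beta>) \<in> sx (delta (d s)) m" using a b by (rule delta_closed)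
  then show "sop (coprod_delta S d) n m \<beta> c \<in> sx (coprod_delta S d) m"
    unfolding cs coprod_sop coprod_sx using s by simp
qed

lemma rho_delta:
  assumes a: "\<alpha> \<in> sx (delta n0) k"
  shows "cut k (rho X n0 x0 \<circ> \<alpha>) \<in> sx (delta (mdeg X n0 x0)) k"
proof (rule cut_delta)
  have an: "opr k n0 \<alpha>" using a by (rule delta_opr)
  fix i assume i: "i \<le> k"
  have "\<alpha> i \<le> n0" using an i by (rule opr_le)
  then show "(rho X n0 x0 \<circ> \<alpha>) i \<le> mdeg X n0 x0" unfolding comp_def by (rule rho_le)
next
  have an: "opr k n0 \<alpha>" using a by (rule delta_opr)
  fix i j assume ij: "i \<le> j" "j \<le> k"
  have "\<alpha> i \<le> \<alpha> j" using an ij by (rule opr_mono)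
  moreover have "\<alpha> j \<le> n0" using an ij(2) by (rule opr_le)
  ultimately show "(rho X n0 x0 \<circ> \<alpha>) i \<le> (rho X n0 x0 \<circ> \<alpha>) j" unfolding comp_def by (rule rho_mono)
qed

lemma enf_g_simp: "enf_g X k (s, \<alpha>) = (s, cut k (rho X (fst s) (snd s) \<circ> \<alpha>))"
  unfolding enf_g_def by simp

lemma enf_f_simp: "enf_f X k (s, \<alpha>) = sop X (fst s) k \<alpha> (snd s)"
  unfolding enf_f_def by simp

lemma g_smap: "smap (enf_C S) (enf_B X S) (enf_g X)"
  unfolding smap_def
proof (intro conjI allI impI)
  fix n c assume c: "c \<in> sx (enf_C S) n"
  obtain s \<alpha> where cs: "c = (s, \<alpha>)" by (cases c)
  from c have s: "s \<in> S" and a: "\<alpha> \<in> sx (delta (fst s)) n" unfolding cs enf_C_def coprod_sx by simp_all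
  have "cut n (rho X (fst s) (snd s) \<circ> \<alpha>) \<in> sx (delta (mdeg X (fst s) (snd s))) n"
    using a by (rule rho_delta)
  then show "enf_g X n c \<in> sx (enf_B X S) n"
    unfolding cs enf_g_simp enf_B_def coprod_sx using s by simp
next
  fix n m \<beta> c assume b: "opr m n \<beta>" and c: "c \<in> sx (enf_C S) n"
  obtain s \<alpha> where cs: "c = (s, \<alpha>)" by (cases c)
  have "cut m (rho X (fst s) (snd s) \<circ> cut m (\<alpha> \<circ> \<beta>)) = cut m (cut n (rho X (fst s) (snd s) \<circ> \<alpha>) \<circ> \<beta>)"
  proof (rule ext)
    fix i show "cut m (rho X (fst s) (snd s) \<circ> cut m (\<alpha> \<circ> \<beta>)) i = cut m (cut n (rho X (fst s) (snd s) \<circ> \<alpha>) \<circ> \<beta>) i"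
    proof (cases "i \<le> m")
      case True
      have "\<beta> i \<le> n" using b True by (rule opr_le)
      then show ?thesis using True unfolding cut_def comp_def by simp
    next
      case False then show ?thesis unfolding cut_def by simp
    qed
  qed
  then show "enf_g X m (sop (enf_C S) n m \<beta> c) = sop (enf_B X S) n m \<beta> (enf_g X n c)"
    unfolding cs enf_C_def enf_B_def coprod_sop enf_g_simp by simp
qed

lemma f_smap:
  assumes X: "sset X" and S: "S \<subseteq> nondeg X"
  shows "smap (enf_C S) X (enf_f X)"
  unfolding smap_def
proof (intro conjI allI impI)
  fix n c assume c: "c \<in> sx (enf_C S) n"
  obtain s \<alpha> where cs: "c = (s, \<alpha>)" by (cases c)
  from c have s: "s \<in> S" and a: "\<alpha> \<in> sx (delta (fst s)) n" unfolding cs enf_C_def coprod_sx by simp_all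
  have x0: "snd s \<in> sx X (fst s)" using S s unfolding nondeg_def by auto
  have "opr n (fst s) \<alpha>" using a by (rule delta_opr)
  then show "enf_f X n c \<in> sx X n" unfolding cs enf_f_simp by (rule sset_closed[OF X _ x0])
next
  fix n m \<beta> c assume b: "opr m n \<beta>" and c: "c \<in> sx (enf_C S) n"
  obtain s \<alpha> where cs: "c = (s, \<alpha>)" by (cases c)
  from c have s: "s \<in> S" and a: "\<alpha> \<in> sx (delta (fst s)) n" unfolding cs enf_C_def coprod_sx by simp_all
  have x0: "snd s \<in> sx X (fst s)" using S s unfolding nondeg_def by auto
  have an: "opr n (fst s) \<alpha>" using a by (rule delta_opr)
  have "sop X (fst s) m (cut m (\<alpha> \<circ> \<beta>)) (snd s) = sop X (fst s) m (\<alpha> \<circ> \<beta>) (snd s)"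
    using X _ x0 by (rule sset_cong) (simp add: cut_def)
  also have "\<dots> = sop X n m \<beta> (sop X (fst s) n \<alpha> (snd s))"
    using X an b x0 by (rule sset_comp[symmetric])
  finally show "enf_f X m (sop (enf_C S) n m \<beta> c) = sop X n m \<beta> (enf_f X n c)"
    unfolding cs enf_C_def coprod_sop enf_f_simp .
qed

lemma section_ex:
  assumes b: "\<beta> \<in> sx (delta (mdeg X n0 x0)) k"
  shows "\<exists>\<gamma>. \<gamma> \<in> sx (delta n0) k \<and> (\<forall>i\<le>k. rho X n0 x0 (\<gamma> i) = \<beta> i)"
proof -
  let ?r = "rho X n0 x0"
  define \<gamma> where "\<gamma> = (\<lambda>i. if i \<le> k then (LEAST t. ?r t = \<beta> i) else 0)"
  have bo: "opr k (mdeg X n0 x0) \<beta>" using b by (rule delta_opr)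
  have ex: "\<exists>t\<le>n0. ?r t = \<beta> i" if i: "i \<le> k" for i
    using opr_le[OF bo i] by (rule rho_surj)
  have g1: "?r (\<gamma> i) = \<beta> i" and g2: "\<gamma> i \<le> n0" if i: "i \<le> k" for i
  proof -
    from ex[OF i] obtain t where t: "t \<le> n0" "?r t = \<beta> i" by blast
    have "?r (LEAST t. ?r t = \<beta> i) = \<beta> i" using t(2) by (rule LeastI)
    then show "?r (\<gamma> i) = \<beta> i" unfolding \<gamma>_def using i by simp
    have "(LEAST t. ?r t = \<beta> i) \<le> t" using t(2) by (rule Least_le)
    then show "\<gamma> i \<le> n0" unfolding \<gamma>_def using i t(1) by simp
  qed
  have mono: "\<gamma> i \<le> \<gamma> j" if ij: "i \<le> j" "j \<le> k" for i j
  proof -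
    have ik: "i \<le> k" using ij by linarith
    have "\<beta> i \<le> \<beta> j" using bo ij by (rule opr_mono)
    then have "\<beta> i \<le> ?r (\<gamma> j)" unfolding g1[OF ij(2)] .
    from rho_ivt[OF g2[OF ij(2)] this] obtain t where t: "t \<le> \<gamma> j" "?r t = \<beta> i" by blast
    have "(LEAST t. ?r t = \<beta> i) \<le> t" using t(2) by (rule Least_le)
    moreover have "\<gamma> i = (LEAST t. ?r t = \<beta> i)" unfolding \<gamma>_def using ik by simp
    ultimately show ?thesis using t(1) by linarith
  qed
  have z: "\<forall>i>k. \<gamma> i = 0" unfolding \<gamma>_def by simp
  have "opr k n0 \<gamma>" unfolding opr_def
  proof (intro conjI allI impI)
    fix i assume "i \<le> k" then show "\<gamma> i \<le> n0" by (rule g2)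
  next
    fix i j assume "i \<le> j" "j \<le> k" then show "\<gamma> i \<le> \<gamma> j" by (rule mono)
  qed
  then have "\<gamma> \<in> sx (delta n0) k" unfolding delta_sx using z by simp
  then show ?thesis using g1 by blast
qed



lemma desing_sx: "sx (desing X) n = eta X n ` sx X n"
  unfolding desing_def by simp

locale enf =
  fixes X :: "'a sset" and S :: "(nat \<times> 'a) set"
  assumes X: "sset X" and S: "S \<subseteq> nondeg X"
begin

abbreviation "BB \<equiv> enf_B X S"
abbreviation "CC \<equiv> enf_C S"
abbreviation "YY \<equiv> enf_Y X S"
abbreviation "PP \<equiv> po_rel BB CC X (enf_g X) (enf_f X)"
abbreviation "qq \<equiv> enf_q X S"

lemma cB: "closed BB" unfolding enf_B_def by (rule coprod_closed)
lemma cC: "closed CC" unfolding enf_C_def by (rule coprod_closed)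
lemma cX: "closed X" using X by (rule sset_closed')
lemma gS: "smap CC BB (enf_g X)" by (rule g_smap)
lemma fS: "smap CC X (enf_f X)" using X S by (rule f_smap)

lemma PP_equiv: "equiv (sx BB n <+> sx X n) (PP n)" using gS fS by (rule po_equiv)

lemma qq_eq: "qq n x = PP n `` {Inr x}"
  unfolding enf_q_def po_inr_def ..

lemma YY_sx: "sx YY n = (sx BB n <+> sx X n) // PP n"
  unfolding enf_Y_def by (rule pushout_sx)

lemma q_sop:
  assumes x: "x \<in> sx X n" and a: "opr m n \<alpha>"
  shows "sop YY n m \<alpha> (qq n x) = qq m (sop X n m \<alpha> x)"
proof -
  have u: "Inr x \<in> sx BB n <+> sx X n" using x by (rule InrI)
  show ?thesis unfolding qq_eq enf_Y_def po_sop[OF cB cC cX gS fS a u] lift_def by simp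
qed

lemma q_in: "x \<in> sx X n \<Longrightarrow> qq n x \<in> sx YY n"
  unfolding qq_eq YY_sx by (rule quotientI) (rule InrI)

lemma xs_in: "s \<in> S \<Longrightarrow> snd s \<in> sx X (fst s)"
  using S unfolding nondeg_def by auto

lemma q_surj: "qq n ` sx X n = sx YY n"
proof (intro equalityI subsetI)
  fix y assume "y \<in> qq n ` sx X n"
  then obtain x where x: "x \<in> sx X n" and y: "y = qq n x" by blast
  show "y \<in> sx YY n" unfolding y using x by (rule q_in)
next
  fix y assume "y \<in> sx YY n"
  then obtain u where u: "u \<in> sx BB n <+> sx X n" and y: "y = PP n `` {u}"
    unfolding YY_sx by (elim quotientE)
  from u consider (l) b where "u = Inl b" "b \<in> sx BB n" | (r) x where "u = Inr x" "x \<in> sx X n" by blast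
  then show "y \<in> qq n ` sx X n"
  proof cases
    case r
    have "y = qq n x" unfolding y r(1) qq_eq ..
    then show ?thesis using r(2) by blast
  next
    case l
    obtain s \<beta> where bs: "b = (s, \<beta>)" by (cases b)
    from l(2) have s: "s \<in> S" and b: "\<beta> \<in> sx (delta (mdeg X (fst s) (snd s))) n"
      unfolding bs enf_B_def coprod_sx by simp_all
    from section_ex[OF b] obtain \<gamma> where g: "\<gamma> \<in> sx (delta (fst s)) n"
      and gr: "\<forall>i\<le>n. rho X (fst s) (snd s) (\<gamma> i) = \<beta> i" by blast
    have c: "(s, \<gamma>) \<in> sx CC n" unfolding enf_C_def coprod_sx using s g by simp
    have "cut n (rho X (fst s) (snd s) \<circ> \<gamma>) = \<beta>"
    proof (rule ext)
      fix i show "cut n (rho X (fst s) (snd s) \<circ> \<gamma>) i = \<beta> i"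
      proof (cases "i \<le> n")
        case True then show ?thesis unfolding cut_def comp_def using gr by simp
      next
        case False then have "\<beta> i = 0" using b unfolding delta_sx by simp
        then show ?thesis using False unfolding cut_def by simp
      qed
    qed
    then have gc: "enf_g X n (s, \<gamma>) = b" unfolding enf_g_simp bs by simp
    have "(Inl (enf_g X n (s, \<gamma>)), Inr (enf_f X n (s, \<gamma>))) \<in> poG BB CC X (enf_g X) (enf_f X) n"
      unfolding poG_def using c by blast
    then have e: "(u, Inr (enf_f X n (s, \<gamma>))) \<in> poG BB CC X (enf_g X) (enf_f X) n"
      unfolding l(1) gc .
    have fx: "enf_f X n (s, \<gamma>) \<in> sx X n" using fS c by (rule smap_in)
    have "(u, Inr (enf_f X n (s, \<gamma>))) \<in> PP n"
      unfolding po_rel_eq using e u fx by blast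
    then have "y = qq n (enf_f X n (s, \<gamma>))" unfolding y qq_eq by (rule equiv_class_eq[OF PP_equiv])
    then show ?thesis using fx by blast
  qed
qed

definition hh :: "nat \<Rightarrow> ((nat \<times> 'a) \<times> (nat \<Rightarrow> nat)) + 'a \<Rightarrow> ((nat \<Rightarrow> ('a \<times> 'a) set) \<Rightarrow> 'a set)" where
  "hh n u = (case u of Inr x \<Rightarrow> eta X n x
     | Inl b \<Rightarrow> eta X n (sop X (fst (fst b)) n
         (SOME \<gamma>. \<gamma> \<in> sx (delta (fst (fst b))) n \<and> (\<forall>i\<le>n. rho X (fst (fst b)) (snd (fst b)) (\<gamma> i) = snd b i))
         (snd (fst b))))"

lemma eta_key:
  assumes s: "s \<in> S" and g: "\<gamma> \<in> sx (delta (fst s)) n" and g': "\<gamma>' \<in> sx (delta (fst s)) n"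
    and r: "\<forall>i\<le>n. rho X (fst s) (snd s) (\<gamma> i) = rho X (fst s) (snd s) (\<gamma>' i)"
  shows "eta X n (sop X (fst s) n \<gamma> (snd s)) = eta X n (sop X (fst s) n \<gamma>' (snd s))"
proof (rule ext)
  fix R
  show "eta X n (sop X (fst s) n \<gamma> (snd s)) R = eta X n (sop X (fst s) n \<gamma>' (snd s)) R"
  proof (cases "goodrel X R")
    case True
    have R: "qrel X R" using True unfolding goodrel_def by simp
    have "(sop X (fst s) n \<gamma> (snd s), sop X (fst s) n \<gamma>' (snd s)) \<in> R n"
    proof (rule key[OF X True xs_in[OF s]])
      show "opr n (fst s) \<gamma>" using g by (rule delta_opr)
      show "opr n (fst s) \<gamma>'" using g' by (rule delta_opr)
      fix i assume "i \<le> n" then show "rho X (fst s) (snd s) (\<gamma> i) = rho X (fst s) (snd s) (\<gamma>' i)"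
        using r by simp
    qed
    then have "R n `` {sop X (fst s) n \<gamma> (snd s)} = R n `` {sop X (fst s) n \<gamma>' (snd s)}"
      by (rule equiv_class_eq[OF qrel_equiv[OF R]])
    then show ?thesis unfolding eta_def using True by simp
  next
    case False then show ?thesis unfolding eta_def by simp
  qed
qed

lemma h_edge:
  assumes c: "c \<in> sx CC n"
  shows "hh n (Inl (enf_g X n c)) = hh n (Inr (enf_f X n c))"
proof -
  obtain s \<alpha> where cs: "c = (s, \<alpha>)" by (cases c)
  from c have s: "s \<in> S" and a: "\<alpha> \<in> sx (delta (fst s)) n" unfolding cs enf_C_def coprod_sx by simp_all
  let ?\<beta> = "cut n (rho X (fst s) (snd s) \<circ> \<alpha>)"
  let ?P = "\<lambda>\<gamma>. \<gamma> \<in> sx (delta (fst s)) n \<and> (\<forall>i\<le>n. rho X (fst s) (snd s) (\<gamma> i) = ?\<beta> i)"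
  have b: "?\<beta> \<in> sx (delta (mdeg X (fst s) (snd s))) n" using a by (rule rho_delta)
  have "\<exists>\<gamma>. ?P \<gamma>" using section_ex[OF b] .
  then have P: "?P (SOME \<gamma>. ?P \<gamma>)" by (rule someI_ex)
  have "eta X n (sop X (fst s) n (SOME \<gamma>. ?P \<gamma>) (snd s)) = eta X n (sop X (fst s) n \<alpha> (snd s))"
  proof (rule eta_key[OF s])
    show "(SOME \<gamma>. ?P \<gamma>) \<in> sx (delta (fst s)) n" using P by simp
    show "\<alpha> \<in> sx (delta (fst s)) n" by (rule a)
    show "\<forall>i\<le>n. rho X (fst s) (snd s) ((SOME \<gamma>. ?P \<gamma>) i) = rho X (fst s) (snd s) (\<alpha> i)"
      using P unfolding cut_def comp_def by simp
  qed
  then show ?thesis unfolding hh_def cs enf_g_simp enf_f_simp by simp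
qed

lemma h_const:
  assumes uv: "(u, v) \<in> PP n"
  shows "hh n u = hh n v"
proof -
  let ?G = "poG BB CC X (enf_g X) (enf_f X) n"
  from uv have r: "(u, v) \<in> (?G \<union> ?G\<inverse>)\<^sup>*" unfolding po_rel_eq by blast
  then show ?thesis
  proof (induction rule: rtrancl_induct)
    case base show ?case by (rule refl)
  next
    case (step y z)
    have e: "hh n y = hh n z" if "(y, z) \<in> ?G" for y z
    proof -
      from that obtain c where c: "c \<in> sx CC n" and y: "y = Inl (enf_g X n c)" and z: "z = Inr (enf_f X n c)"
        unfolding poG_def by blast
      show ?thesis unfolding y z using c by (rule h_edge)
    qed
    from step.hyps(2) have "hh n y = hh n z"
    proof
      assume "(y, z) \<in> ?G" then show ?thesis by (rule e)
    next
      assume "(y, z) \<in> ?G\<inverse>" then have "(z, y) \<in> ?G" by simp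
      then show ?thesis by (rule e[THEN sym])
    qed
    with step.IH show ?case by (rule trans)
  qed
qed

definition pp :: "nat \<Rightarrow> (((nat \<times> 'a) \<times> (nat \<Rightarrow> nat)) + 'a) set \<Rightarrow> ((nat \<Rightarrow> ('a \<times> 'a) set) \<Rightarrow> 'a set)" where
  "pp n y = hh n (SOME u. u \<in> y)"

lemma pp_q: assumes x: "x \<in> sx X n" shows "pp n (qq n x) = eta X n x"
proof -
  have "Inr x \<in> PP n `` {Inr x}" using PP_equiv InrI[OF x] by (rule equiv_class_self)
  then have "(SOME u. u \<in> PP n `` {Inr x}) \<in> PP n `` {Inr x}" by (rule someI)
  then have "(Inr x, SOME u. u \<in> PP n `` {Inr x}) \<in> PP n" by simp
  then have "hh n (Inr x) = hh n (SOME u. u \<in> PP n `` {Inr x})" by (rule h_const)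
  then show ?thesis unfolding pp_def qq_eq hh_def by simp
qed

lemma pp_smap: "smap YY (desing X) pp"
  unfolding smap_def
proof (intro conjI allI impI)
  fix n y assume "y \<in> sx YY n"
  then obtain x where x: "x \<in> sx X n" and y: "y = qq n x" unfolding q_surj[symmetric] by blast
  show "pp n y \<in> sx (desing X) n" unfolding y pp_q[OF x] desing_sx using x by (rule imageI)
next
  fix n m \<alpha> y assume a: "opr m n \<alpha>" and "y \<in> sx YY n"
  then obtain x where x: "x \<in> sx X n" and y: "y = qq n x" unfolding q_surj[symmetric] by blast
  have xa: "sop X n m \<alpha> x \<in> sx X m" using X a x by (rule sset_closed)
  show "pp m (sop YY n m \<alpha> y) = sop (desing X) n m \<alpha> (pp n y)"
    unfolding y q_sop[OF x a] pp_q[OF x] pp_q[OF xa] desing_sop[OF X x a] ..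
qed

lemma pp_surj: "pp n ` sx YY n = sx (desing X) n"
proof -
  have "pp n ` sx YY n = pp n ` qq n ` sx X n" unfolding q_surj ..
  also have "\<dots> = eta X n ` sx X n" unfolding image_image using pp_q by (intro image_cong) simp_all
  finally show ?thesis unfolding desing_sx .
qed

lemma pp_unique:
  assumes "smap YY (desing X) p'" "\<forall>n x. x \<in> sx X n \<longrightarrow> p' n (qq n x) = eta X n x"
    and y: "y \<in> sx YY n"
  shows "p' n y = pp n y"
proof -
  from y obtain x where x: "x \<in> sx X n" and yx: "y = qq n x" unfolding q_surj[symmetric] by blast
  have "p' n y = eta X n x" unfolding yx using assms(2) x by simp
  also have "\<dots> = pp n y" unfolding yx pp_q[OF x] ..
  finally show ?thesis .
qed

end



context enf
begin

definition RR :: "nat \<Rightarrow> ('a \<times> 'a) set" where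
  "RR n = {(x, x'). x \<in> sx X n \<and> x' \<in> sx X n \<and> qq n x = qq n x'}"

lemma RR_qrel: "qrel X RR"
  unfolding qrel_def
proof (intro conjI allI impI)
  fix n
  show "equiv (sx X n) (RR n)"
  proof (rule equivI)
    show "RR n \<subseteq> sx X n \<times> sx X n" unfolding RR_def by blast
    show "refl_on (sx X n) (RR n)" unfolding refl_on_def RR_def by blast
    show "sym (RR n)" unfolding sym_def RR_def by simp
    show "trans (RR n)" unfolding trans_def RR_def by simp
  qed
next
  fix n m \<alpha> x y assume a: "opr m n \<alpha>" and xy: "(x, y) \<in> RR n"
  then have x: "x \<in> sx X n" and y: "y \<in> sx X n" and q: "qq n x = qq n y" unfolding RR_def by simp_all
  have xa: "sop X n m \<alpha> x \<in> sx X m" using X a x by (rule sset_closed)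
  have ya: "sop X n m \<alpha> y \<in> sx X m" using X a y by (rule sset_closed)
  have "qq m (sop X n m \<alpha> x) = qq m (sop X n m \<alpha> y)"
    unfolding q_sop[OF x a, symmetric] q_sop[OF y a, symmetric] q ..
  then show "(sop X n m \<alpha> x, sop X n m \<alpha> y) \<in> RR m" unfolding RR_def using xa ya by simp
qed

lemma RR_good:
  assumes NS: "nonsingular YY"
  shows "goodrel X RR"
  unfolding goodrel_def
proof (intro conjI)
  show R: "qrel X RR" by (rule RR_qrel)
  let ?Z = "quot X RR"
  show "nonsingular ?Z"
    unfolding nonsingular_def
  proof (intro ballI allI, clarify)
    fix n c k assume nd: "(n, c) \<in> nondeg ?Z"
    then have c: "c \<in> sx X n // RR n" and ndg: "\<not> degenerate ?Z n c"
      unfolding nondeg_def quot_sx by simp_all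
    from c obtain x where x: "x \<in> sx X n" and cx: "c = RR n `` {x}" by (elim quotientE)
    have ndY: "\<not> degenerate YY n (qq n x)"
    proof
      assume "degenerate YY n (qq n x)"
      then obtain m \<sigma> y where m: "m < n" and s: "opr n m \<sigma>" and su: "\<sigma> ` {0..n} = {0..m}"
        and y: "y \<in> sx YY m" and qy: "qq n x = sop YY m n \<sigma> y"
        unfolding degenerate_def by blast
      from y obtain x' where x': "x' \<in> sx X m" and yx: "y = qq m x'" unfolding q_surj[symmetric] by blast
      have xs: "sop X m n \<sigma> x' \<in> sx X n" using X s x' by (rule sset_closed)
      have "qq n x = qq n (sop X m n \<sigma> x')" unfolding qy yx q_sop[OF x' s] ..
      then have "(x, sop X m n \<sigma> x') \<in> RR n" unfolding RR_def using x xs by simp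
      then have "c = RR n `` {sop X m n \<sigma> x'}" unfolding cx by (rule equiv_class_eq[OF qrel_equiv[OF R]])
      also have "\<dots> = sop ?Z m n \<sigma> (RR m `` {x'})" by (rule quot_sop[OF X R x' s, symmetric])
      finally have "c = sop ?Z m n \<sigma> (RR m `` {x'})" .
      moreover have "RR m `` {x'} \<in> sx ?Z m" unfolding quot_sx using x' by (rule quotientI)
      ultimately have "degenerate ?Z n c" unfolding degenerate_def using m s su by blast
      with ndg show False by simp
    qed
    have "(n, qq n x) \<in> nondeg YY" unfolding nondeg_def using q_in[OF x] ndY by simp
    then have injY: "inj_on (\<lambda>\<alpha>. sop YY n k \<alpha> (qq n x)) (sx (delta n) k)"
      using NS unfolding nonsingular_def by blast
    show "inj_on (\<lambda>\<alpha>. sop ?Z n k \<alpha> c) (sx (delta n) k)"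
    proof (rule inj_onI)
      fix \<alpha> \<alpha>' assume a: "\<alpha> \<in> sx (delta n) k" and a': "\<alpha>' \<in> sx (delta n) k"
        and e: "sop ?Z n k \<alpha> c = sop ?Z n k \<alpha>' c"
      have ao: "opr k n \<alpha>" using a by (rule delta_opr)
      have ao': "opr k n \<alpha>'" using a' by (rule delta_opr)
      have xa: "sop X n k \<alpha> x \<in> sx X k" using X ao x by (rule sset_closed)
      have xa': "sop X n k \<alpha>' x \<in> sx X k" using X ao' x by (rule sset_closed)
      have "RR k `` {sop X n k \<alpha> x} = RR k `` {sop X n k \<alpha>' x}"
        using e unfolding cx quot_sop[OF X R x ao] quot_sop[OF X R x ao'] .
      then have "(sop X n k \<alpha> x, sop X n k \<alpha>' x) \<in> RR k"
        using qrel_equiv[OF R] xa' by (rule eq_equiv_class)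
      then have "qq k (sop X n k \<alpha> x) = qq k (sop X n k \<alpha>' x)" unfolding RR_def by simp
      then have eY: "sop YY n k \<alpha> (qq n x) = sop YY n k \<alpha>' (qq n x)"
        unfolding q_sop[OF x ao] q_sop[OF x ao'] .
      show "\<alpha> = \<alpha>'" by (rule inj_onD[OF injY eY a a'])
    qed
  qed
qed

lemma eta_inj:
  assumes NS: "nonsingular YY" and x: "x \<in> sx X n" and x': "x' \<in> sx X n"
    and e: "eta X n x = eta X n x'"
  shows "qq n x = qq n x'"
proof -
  have G: "goodrel X RR" using NS by (rule RR_good)
  have "eta X n x RR = eta X n x' RR" using e by simp
  then have "RR n `` {x} = RR n `` {x'}" unfolding eta_def using G by simp
  then have "(x, x') \<in> RR n" using qrel_equiv[OF RR_qrel] x' by (rule eq_equiv_class)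
  then show ?thesis unfolding RR_def by simp
qed

definition ginv :: "nat \<Rightarrow> ((nat \<Rightarrow> ('a \<times> 'a) set) \<Rightarrow> 'a set) \<Rightarrow> (((nat \<times> 'a) \<times> (nat \<Rightarrow> nat)) + 'a) set" where
  "ginv n F = qq n (SOME x. x \<in> sx X n \<and> eta X n x = F)"

lemma ginv_eta:
  assumes NS: "nonsingular YY" and x: "x \<in> sx X n"
  shows "ginv n (eta X n x) = qq n x"
proof -
  have "\<exists>x'. x' \<in> sx X n \<and> eta X n x' = eta X n x" using x by blast
  then have P: "(SOME x'. x' \<in> sx X n \<and> eta X n x' = eta X n x) \<in> sx X n \<and>
      eta X n (SOME x'. x' \<in> sx X n \<and> eta X n x' = eta X n x) = eta X n x" by (rule someI_ex)
  have "qq n (SOME x'. x' \<in> sx X n \<and> eta X n x' = eta X n x) = qq n x"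
    using NS conjunct1[OF P] x conjunct2[OF P] by (rule eta_inj)
  then show ?thesis unfolding ginv_def .
qed

lemma iso:
  assumes NS: "nonsingular YY"
  shows "siso YY (desing X) pp"
  unfolding siso_def
proof (intro conjI exI)
  show "smap YY (desing X) pp" by (rule pp_smap)
  show "smap (desing X) YY ginv"
    unfolding smap_def
  proof (intro conjI allI impI)
    fix n F assume "F \<in> sx (desing X) n"
    then obtain x where x: "x \<in> sx X n" and F: "F = eta X n x" unfolding desing_sx by blast
    show "ginv n F \<in> sx YY n" unfolding F ginv_eta[OF NS x] using x by (rule q_in)
  next
    fix n m \<alpha> F assume a: "opr m n \<alpha>" and "F \<in> sx (desing X) n"
    then obtain x where x: "x \<in> sx X n" and F: "F = eta X n x" unfolding desing_sx by blast
    have xa: "sop X n m \<alpha> x \<in> sx X m" using X a x by (rule sset_closed)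
    show "ginv m (sop (desing X) n m \<alpha> F) = sop YY n m \<alpha> (ginv n F)"
      unfolding F desing_sop[OF X x a] ginv_eta[OF NS x] ginv_eta[OF NS xa] q_sop[OF x a] ..
  qed
  show "\<forall>n y. y \<in> sx YY n \<longrightarrow> ginv n (pp n y) = y"
  proof (intro allI impI)
    fix n y assume "y \<in> sx YY n"
    then obtain x where x: "x \<in> sx X n" and y: "y = qq n x" unfolding q_surj[symmetric] by blast
    show "ginv n (pp n y) = y" unfolding y pp_q[OF x] ginv_eta[OF NS x] ..
  qed
  show "\<forall>n F. F \<in> sx (desing X) n \<longrightarrow> pp n (ginv n F) = F"
  proof (intro allI impI)
    fix n F assume "F \<in> sx (desing X) n"
    then obtain x where x: "x \<in> sx X n" and F: "F = eta X n x" unfolding desing_sx by blast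
    show "pp n (ginv n F) = F" unfolding F ginv_eta[OF NS x] pp_q[OF x] ..
  qed
qed

end

theorem mainTheorem6:
  fixes X :: "'a sset" and S :: "(nat \<times> 'a) set"
  assumes "sset X" and "S \<subseteq> nondeg X"
  shows "(\<forall>n. enf_q X S n ` sx X n = sx (enf_Y X S) n)
    \<and> (\<exists>p. smap (enf_Y X S) (desing X) p
          \<and> (\<forall>n x. x \<in> sx X n \<longrightarrow> p n (enf_q X S n x) = eta X n x)
          \<and> (\<forall>p'. smap (enf_Y X S) (desing X) p'
                  \<and> (\<forall>n x. x \<in> sx X n \<longrightarrow> p' n (enf_q X S n x) = eta X n x)
                  \<longrightarrow> (\<forall>n y. y \<in> sx (enf_Y X S) n \<longrightarrow> p' n y = p n y))
          \<and> (\<forall>n. p n ` sx (enf_Y X S) n = sx (desing X) n)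
          \<and> (nonsingular (enf_Y X S) \<longrightarrow> siso (enf_Y X S) (desing X) p))"
proof -
  interpret e: enf X S using assms by (rule enf.intro)
  show ?thesis
  proof (intro conjI allI impI exI)
    fix n show "enf_q X S n ` sx X n = sx (enf_Y X S) n" by (rule e.q_surj)
  next
    show "smap (enf_Y X S) (desing X) e.pp" by (rule e.pp_smap)
  next
    fix n x assume "x \<in> sx X n" then show "e.pp n (enf_q X S n x) = eta X n x" by (rule e.pp_q)
  next
    fix p' n y
    assume h: "smap (enf_Y X S) (desing X) p' \<and> (\<forall>n x. x \<in> sx X n \<longrightarrow> p' n (enf_q X S n x) = eta X n x)"
      and y: "y \<in> sx (enf_Y X S) n"
    show "p' n y = e.pp n y" using conjunct1[OF h] conjunct2[OF h] y by (rule e.pp_unique)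
  next
    fix n show "e.pp n ` sx (enf_Y X S) n = sx (desing X) n" by (rule e.pp_surj)
  next
    assume "nonsingular (enf_Y X S)" then show "siso (enf_Y X S) (desing X) e.pp" by (rule e.iso)
  qed
qed


end
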